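(* Let $S_1(x),\dots,S_n(x) \in \mathbb{C}\{\!\{x\}\!\}$ be Puiseux series with nonnegative valuations. Then \[ \operatorname{val}\bigl(S_1(x)+\dots+S_n(x)\bigr) \le \frac{n(n-1)}{2} + \operatorname{val}\Bigl(W\bigl(S_1(x),\dots,S_n(x)\bigr)\Bigr). \]
   Context: A Puiseux series is a formal series $S(x)=\sum_{i\ge 1} c_i x^{\lambda_i}$ (finite or infinite) with nonzero complex coefficients $c_i$ and a strictly increasing sequence of rational exponents $\lambda_i$ having a common denominator, or the empty series $0$; they form a field $\mathbb{C}\{\!\{x\}\!\}$ under the usual operations. The valuation is $\operatorname{val}(S)=\lambda_1$ and $\operatorname{val}(0)=+\infty$. The formal derivative is $\frac{\partial S}{\partial x}(x)=\sum_i \lambda_i c_i x^{\lambda_i-1}$, and $\frac{\partial^k S}{\partial x^k}$ denotes the $k$-th iterated derivative ($0$-th derivative is $S$). The Wronskian $W(S_1,\dots,S_n)$ is the determinant of the $n\times n$ matrix whose $(i,j)$ entry is $\frac{\partial^{i-1} S_j}{\partial x^{i-1}}(x)$, for $1\le i,j\le n$. *)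

theory Defs
  imports Complex_Main "HOL-Library.Extended_Real" "HOL-Combinatorics.Permutations"
begin

text \<open>A Puiseux series is represented by its coefficient function
  c :: rat => complex (coefficient of x^q).\<close>

type_synonym puiseux = "rat \<Rightarrow> complex"

definition is_puiseux :: "puiseux \<Rightarrow> bool" where
  "is_puiseux c \<longleftrightarrow>
     (\<exists>d::nat. d > 0 \<and> (\<exists>N::int. \<forall>q. c q \<noteq> 0 \<longrightarrow>
        (\<exists>k::int. k \<ge> N \<and> q = of_int k / of_nat d)))"

definition pz_val :: "puiseux \<Rightarrow> ereal" where
  "pz_val c = (if \<forall>q. c q = 0 then \<infinity>
               else ereal (real_of_rat (LEAST q. c q \<noteq> 0)))"

definition pz_add :: "puiseux \<Rightarrow> puiseux \<Rightarrow> puiseux" where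
  "pz_add a b = (\<lambda>q. a q + b q)"

definition pz_one :: puiseux where
  "pz_one = (\<lambda>q. if q = 0 then 1 else 0)"

text \<open>Cauchy product (the index set is finite for Puiseux series).\<close>
definition pz_mult :: "puiseux \<Rightarrow> puiseux \<Rightarrow> puiseux" where
  "pz_mult a b = (\<lambda>q. \<Sum>r \<in> {r. a r \<noteq> 0 \<and> b (q - r) \<noteq> 0}. a r * b (q - r))"

definition pz_prod_list :: "puiseux list \<Rightarrow> puiseux" where
  "pz_prod_list xs = foldr pz_mult xs pz_one"

definition pz_deriv :: "puiseux \<Rightarrow> puiseux" where
  "pz_deriv c = (\<lambda>q. of_rat (q + 1) * c (q + 1))"

definition wronskian :: "nat \<Rightarrow> (nat \<Rightarrow> puiseux) \<Rightarrow> puiseux" where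
  "wronskian n S = (\<lambda>q. \<Sum>p \<in> {p. p permutes {..<n}}.
      of_int (sign p) * pz_prod_list (map (\<lambda>i. (pz_deriv ^^ i) (S (p i))) [0..<n]) q)"

end

theory Submission imports Defs "HOL-Computational_Algebra.Formal_Laurent_Series" "Jordan_Normal_Form.Determinant"
begin

definition vb :: "int \<Rightarrow> complex fls \<Rightarrow> bool" where
  "vb a f \<longleftrightarrow> (\<forall>k<a. fls_nth f (k) = 0)"

lemma vb_zero[simp]: "vb a 0" by (simp add: vb_def)

lemma vb_mono: "a' \<le> a \<Longrightarrow> vb a f \<Longrightarrow> vb a' f" by (auto simp: vb_def)

lemma vb_add: "vb a f \<Longrightarrow> vb a g \<Longrightarrow> vb a (f + g)" by (simp add: vb_def)

lemma vb_sum: "finite A \<Longrightarrow> (\<And>i. i \<in> A \<Longrightarrow> vb a (g i)) \<Longrightarrow> vb a (\<Sum>i\<in>A. g i)"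
  by (induction A rule: finite_induct) (auto intro: vb_add)

lemma vb_le_subdeg: "vb a f \<Longrightarrow> f \<noteq> 0 \<Longrightarrow> a \<le> fls_subdegree f"
  using nth_fls_subdegree_nonzero unfolding vb_def by (meson not_less)

lemma vb_mult: "vb a f \<Longrightarrow> vb b g \<Longrightarrow> vb (a + b) (f * g)"
proof (cases "f = 0 \<or> g = 0")
  case True then show ?thesis by auto
next
  case False
  assume "vb a f" "vb b g"
  then have "a \<le> fls_subdegree f" "b \<le> fls_subdegree g" using False vb_le_subdeg by auto
  then show ?thesis unfolding vb_def by (auto intro: fls_times_nth_eq0)
qed

lemma vb_one: "vb 0 1" by (simp add: vb_def)

lemma vb_of_int: "vb 0 (of_int c)" by (simp add: vb_def fls_of_int_nth)

lemma vb_prod: "finite A \<Longrightarrow> (\<And>i. i \<in> A \<Longrightarrow> vb (b i) (g i)) \<Longrightarrow> vb (\<Sum>i\<in>A. b i) (\<Prod>i\<in>A. g i)"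
proof (induction A rule: finite_induct)
  case empty then show ?case by (simp add: vb_one)
next
  case (insert x F)
  then show ?case by (simp add: vb_mult)
qed

definition emb :: "nat \<Rightarrow> complex fls \<Rightarrow> puiseux" where
  "emb D f q = (if of_int \<lfloor>q * of_nat D\<rfloor> = q * of_nat D then fls_nth f (\<lfloor>q * of_nat D\<rfloor>) else 0)"

lemma emb_at: "D > 0 \<Longrightarrow> emb D f (of_int k / of_nat D) = fls_nth f (k)"
  by (simp add: emb_def)

lemma emb_off: "D > 0 \<Longrightarrow> (\<And>k. q \<noteq> of_int k / of_nat D) \<Longrightarrow> emb D f q = 0"
  unfolding emb_def by (auto simp: eq_divide_eq split: if_splits)

lemma emb_cases: "D > 0 \<Longrightarrow> (\<And>k. q = of_int k / of_nat D \<Longrightarrow> P) \<Longrightarrow> ((\<And>k. q \<noteq> of_int k / of_nat D) \<Longrightarrow> P) \<Longrightarrow> P"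
  by blast

lemma emb_add: "emb D (f + g) q = emb D f q + emb D g q" by (simp add: emb_def)
lemma emb_0: "emb D 0 q = 0" by (simp add: emb_def)
lemma emb_sum: "finite A \<Longrightarrow> emb D (\<Sum>i\<in>A. g i) q = (\<Sum>i\<in>A. emb D (g i) q)"
  by (induction A rule: finite_induct) (auto simp: emb_add emb_0)

lemma emb_one: "D > 0 \<Longrightarrow> emb D 1 = pz_one"
proof
  fix q :: rat assume D: "D > 0"
  show "emb D 1 q = pz_one q"
  proof (rule emb_cases[OF D, of q])
    fix k assume q: "q = of_int k / of_nat D"
    then have "q = 0 \<longleftrightarrow> k = 0" using D by auto
    then show ?thesis using q D by (simp add: emb_at pz_one_def)
  next
    assume "\<And>k. q \<noteq> of_int k / of_nat D"
    then have "q \<noteq> 0" by (metis div_0 of_int_0)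
    then show ?thesis using emb_off[OF D] \<open>\<And>k. q \<noteq> of_int k / of_nat D\<close> by (simp add: pz_one_def)
  qed
qed

lemma emb_nz: "D > 0 \<Longrightarrow> emb D f q \<noteq> 0 \<Longrightarrow> \<exists>k. q = of_int k / of_nat D \<and> fls_nth f k \<noteq> 0"
  by (metis emb_at emb_off)

lemma emb_mult: "D > 0 \<Longrightarrow> pz_mult (emb D f) (emb D g) = emb D (f * g)"
proof
  fix q :: rat assume D: "D > 0"
  let ?R = "{r. emb D f r \<noteq> 0 \<and> emb D g (q - r) \<noteq> 0}"
  show "pz_mult (emb D f) (emb D g) q = emb D (f * g) q"
  proof (rule emb_cases[OF D, of q])
    fix n assume q: "q = of_int n / of_nat D"
    let ?h = "\<lambda>i::int. of_int i / (of_nat D :: rat)"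
    let ?I = "{i. fls_nth f i \<noteq> 0 \<and> fls_nth g (n - i) \<noteq> 0}"
    have hq: "q - ?h i = ?h (n - i)" for i using q by (simp add: diff_divide_distrib)
    have R: "?R = ?h ` ?I"
    proof
      show "?R \<subseteq> ?h ` ?I"
      proof
        fix r assume "r \<in> ?R"
        then obtain i where i: "r = ?h i" "fls_nth f i \<noteq> 0" using emb_nz[OF D] by blast
        then have "emb D g (?h (n - i)) \<noteq> 0" using \<open>r \<in> ?R\<close> hq by auto
        then have "fls_nth g (n - i) \<noteq> 0" by (metis emb_at[OF D])
        then show "r \<in> ?h ` ?I" using i by auto
      qed
    next
      show "?h ` ?I \<subseteq> ?R" using hq emb_at[OF D] by (auto simp del: of_int_diff)
    qed
    have inj: "inj ?h" using D by (auto intro!: injI simp: divide_cancel_right)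
    have "pz_mult (emb D f) (emb D g) q = (\<Sum>r\<in>?h ` ?I. emb D f r * emb D g (q - r))"
      unfolding pz_mult_def R ..
    also have "\<dots> = (\<Sum>i\<in>?I. fls_nth f i * fls_nth g (n - i))"
      by (subst sum.reindex) (auto intro: inj_on_subset[OF inj] simp del: of_int_diff simp: hq emb_at[OF D])
    also have "\<dots> = (\<Sum>i=fls_subdegree f..n - fls_subdegree g. fls_nth f i * fls_nth g (n - i))"
    proof (rule sum.mono_neutral_cong_left)
      show "?I \<subseteq> {fls_subdegree f..n - fls_subdegree g}"
        using fls_subdegree_leI[of f] fls_subdegree_leI[of g] by force
    qed auto
    also have "\<dots> = fls_nth (f * g) n" by (simp add: fls_times_nth(2))
    finally show ?thesis using q emb_at[OF D] by simp
  next
    assume nq: "\<And>k. q \<noteq> of_int k / of_nat D"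
    have "?R = {}"
    proof (rule ccontr)
      assume "?R \<noteq> {}"
      then obtain r where "emb D f r \<noteq> 0" "emb D g (q - r) \<noteq> 0" by auto
      then obtain i j where "r = of_int i / of_nat D" "q - r = of_int j / of_nat D"
        using emb_nz[OF D] by metis
      then have "q = of_int (i + j) / of_nat D" by (simp add: add_divide_distrib)
      then show False using nq by blast
    qed
    have "pz_mult (emb D f) (emb D g) q = (\<Sum>r\<in>?R. emb D f r * emb D g (q - r))"
      by (simp add: pz_mult_def)
    also have "\<dots> = 0" by (simp only: \<open>?R = {}\<close> sum.empty)
    finally show ?thesis using emb_off[OF D nq] by simp
  qed
qed

lemma emb_prod_list: "D > 0 \<Longrightarrow> pz_prod_list (map (emb D) xs) = emb D (prod_list xs)"
  by (induction xs) (auto simp: pz_prod_list_def emb_one emb_mult)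

definition dl :: "nat \<Rightarrow> complex fls \<Rightarrow> complex fls" where
  "dl D f = Abs_fls (\<lambda>k. of_rat ((of_int k + of_nat D) / of_nat D) * fls_nth f (k + int D))"

lemma dl_nth: "fls_nth (dl D f) k = of_rat ((of_int k + of_nat D) / of_nat D) * fls_nth f (k + int D)"
  unfolding dl_def
  by (rule nth_Abs_fls_lower_bound[where N = "fls_subdegree f - int D"]) auto

lemma dl_add: "dl D (f + g) = dl D f + dl D g"
  by (rule fls_eqI) (simp add: dl_nth algebra_simps)

lemma dl_0: "dl D 0 = 0"
  by (rule fls_eqI) (simp add: dl_nth)

lemma dl_sum: "finite A \<Longrightarrow> dl D (\<Sum>i\<in>A. g i) = (\<Sum>i\<in>A. dl D (g i))"
  by (induction A rule: finite_induct) (auto simp: dl_add dl_0)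

lemma dl_pow_sum: "finite A \<Longrightarrow> (dl D ^^ m) (\<Sum>i\<in>A. g i) = (\<Sum>i\<in>A. (dl D ^^ m) (g i))"
  by (induction m) (auto simp: dl_sum)

lemma vb_dl: "vb a f \<Longrightarrow> vb (a - int D) (dl D f)"
  by (simp add: vb_def dl_nth)

lemma vb_dl_pow: "vb a f \<Longrightarrow> vb (a - int m * int D) ((dl D ^^ m) f)"
proof (induction m)
  case 0 then show ?case by simp
next
  case (Suc m)
  then have "vb (a - int m * int D - int D) ((dl D ^^ Suc m) f)" by (simp add: vb_dl)
  then show ?case by (simp add: algebra_simps)
qed

lemma emb_deriv: "D > 0 \<Longrightarrow> pz_deriv (emb D f) = emb D (dl D f)"
proof
  fix q :: rat assume D: "D > 0"
  show "pz_deriv (emb D f) q = emb D (dl D f) q"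
  proof (rule emb_cases[OF D, of q])
    fix k assume q: "q = of_int k / of_nat D"
    then have q1: "q + 1 = of_int (k + int D) / of_nat D" using D by (simp add: field_simps)
    have "pz_deriv (emb D f) q = of_rat (q + 1) * fls_nth f (k + int D)"
      unfolding pz_deriv_def q1 emb_at[OF D] ..
    also have "\<dots> = emb D (dl D f) q"
      using q1 by (simp add: q emb_at[OF D] dl_nth)
    finally show ?thesis .
  next
    assume nq: "\<And>k. q \<noteq> of_int k / of_nat D"
    have "\<And>k. q + 1 \<noteq> of_int k / of_nat D"
    proof
      fix k assume "q + 1 = of_int k / of_nat D"
      then have "q = of_int (k - int D) / of_nat D" using D by (simp add: field_simps)
      then show False using nq by blast
    qed
    then show ?thesis using emb_off[OF D] nq by (simp add: pz_deriv_def)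
  qed
qed

lemma emb_deriv_pow: "D > 0 \<Longrightarrow> (pz_deriv ^^ m) (emb D f) = emb D ((dl D ^^ m) f)"
  by (induction m) (auto simp: emb_deriv)

lemma pz_val_emb0: "pz_val (emb D 0) = \<infinity>"
  by (simp add: pz_val_def emb_0)

lemma pz_val_emb: assumes D: "D > 0" and f: "f \<noteq> 0"
  shows "pz_val (emb D f) = ereal (real_of_rat (of_int (fls_subdegree f) / of_nat D))"
proof -
  let ?m = "of_int (fls_subdegree f) / (of_nat D :: rat)"
  have nz: "emb D f ?m \<noteq> 0" using emb_at[OF D] f by simp
  have "(LEAST q. emb D f q \<noteq> 0) = ?m"
  proof (rule Least_equality)
    fix y assume "emb D f y \<noteq> 0"
    then obtain k where k: "y = of_int k / of_nat D" "fls_nth f k \<noteq> 0" using emb_nz[OF D] by blast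
    have "fls_subdegree f \<le> k" by (rule fls_subdegree_leI[OF k(2)])
    then show "?m \<le> y" using D k(1) by (simp add: divide_right_mono)
  qed (rule nz)
  then show ?thesis using nz unfolding pz_val_def by auto
qed

lemma emb_of_int_mult: "emb D (of_int c * g) q = of_int c * emb D g q"
  by (simp add: emb_def fls_of_int)

lemma puiseux_least:
  assumes "is_puiseux c" "c q0 \<noteq> 0"
  shows "\<exists>m. c m \<noteq> 0 \<and> (\<forall>q. c q \<noteq> 0 \<longrightarrow> m \<le> q)"
proof -
  obtain d :: nat and N :: int where d: "d > 0"
    and N: "\<And>q. c q \<noteq> 0 \<Longrightarrow> \<exists>k. k \<ge> N \<and> q = of_int k / of_nat d"
    using assms(1) unfolding is_puiseux_def by blast
  define P where "P m \<longleftrightarrow> c (of_int (N + int m) / of_nat d) \<noteq> 0" for m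
  obtain k0 where k0: "k0 \<ge> N" "q0 = of_int k0 / of_nat d" using N assms(2) by blast
  have "P (nat (k0 - N))" using k0 assms(2) by (simp add: P_def)
  then have P0: "P (LEAST m. P m)" by (rule LeastI)
  show ?thesis
  proof (intro exI conjI allI impI)
    show "c (of_int (N + int (LEAST m. P m)) / of_nat d) \<noteq> 0" using P0 by (simp add: P_def)
  next
    fix q assume "c q \<noteq> 0"
    then obtain k where k: "k \<ge> N" "q = of_int k / of_nat d" using N by blast
    then have "P (nat (k - N))" using \<open>c q \<noteq> 0\<close> by (simp add: P_def)
    then have "(LEAST m. P m) \<le> nat (k - N)" by (rule Least_le)
    then have "N + int (LEAST m. P m) \<le> k" using k by linarith
    then show "of_int (N + int (LEAST m. P m)) / of_nat d \<le> q"
      using k d by (simp add: divide_right_mono)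
  qed
qed

lemma puiseux_nonneg:
  assumes "is_puiseux c" "pz_val c \<ge> 0" "q < 0"
  shows "c q = 0"
proof (rule ccontr)
  assume cq: "c q \<noteq> 0"
  obtain m where m: "c m \<noteq> 0" "\<And>q. c q \<noteq> 0 \<Longrightarrow> m \<le> q" using puiseux_least[OF assms(1) cq] by blast
  have L: "(LEAST q. c q \<noteq> 0) = m" by (rule Least_equality) (use m in auto)
  have "pz_val c = ereal (real_of_rat m)" using cq unfolding pz_val_def L by auto
  then have "m \<ge> 0" using assms(2) by (simp add: zero_ereal_def)
  moreover have "m \<le> q" using m(2)[OF cq] .
  ultimately show False using assms(3) by simp
qed

lemma sum_id_real: "real (\<Sum>i<n. i) = real n * (real n - 1) / 2"
  by (induction n) (auto simp: field_simps)

lemma perm_eq_iff: "p permutes A \<Longrightarrow> (p i = y) \<longleftrightarrow> (i = inv_into UNIV p y)"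
  using permutes_inverses by metis

theorem mainTheorem2:
  fixes n :: nat and S :: "nat \<Rightarrow> puiseux"
  assumes "n \<ge> 1"
    and "\<forall>i<n. is_puiseux (S i)"
    and "\<forall>i<n. pz_val (S i) \<ge> 0"
  shows "pz_val (\<lambda>q. \<Sum>i<n. S i q)
           \<le> ereal (real n * (real n - 1) / 2) + pz_val (wronskian n S)"
proof -
  have "\<forall>i\<in>{..<n}. \<exists>dd::nat. dd > 0 \<and> (\<exists>N::int. \<forall>q. S i q \<noteq> 0 \<longrightarrow>
        (\<exists>k::int. k \<ge> N \<and> q = of_int k / of_nat dd))"
    using assms(2) unfolding is_puiseux_def by blast
  from bchoice[OF this] obtain d where d: "\<forall>i\<in>{..<n}. d i > 0 \<and> (\<exists>N::int. \<forall>q. S i q \<noteq> 0 \<longrightarrow>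
        (\<exists>k::int. k \<ge> N \<and> q = of_int k / of_nat (d i)))" by blast
  define D where "D = (\<Prod>i<n. d i)"
  have D: "D > 0" unfolding D_def using d by (auto intro: prod_pos)
  have nonneg: "\<And>i q. i < n \<Longrightarrow> q < 0 \<Longrightarrow> S i q = 0"
    using puiseux_nonneg assms(2,3) by blast
  define f where "f i = Abs_fls (\<lambda>k. S i (of_int k / of_nat D))" for i
  have fnth: "fls_nth (f i) k = S i (of_int k / of_nat D)" if "i < n" for i k
    unfolding f_def
    by (rule nth_Abs_fls_lower_bound[where N = 0]) (use that D nonneg in \<open>auto simp: divide_less_0_iff\<close>)
  have fvb: "vb 0 (f i)" if "i < n" for i
    using that D nonneg by (auto simp: vb_def fnth divide_less_0_iff)
  have Semb: "S i = emb D (f i)" if i: "i < n" for i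
  proof
    fix q
    show "S i q = emb D (f i) q"
    proof (rule emb_cases[OF D, of q])
      fix k assume "q = of_int k / of_nat D"
      then show ?thesis using emb_at[OF D] fnth[OF i] by simp
    next
      assume nq: "\<And>k. q \<noteq> of_int k / of_nat D"
      have "S i q = 0"
      proof (rule ccontr)
        assume "S i q \<noteq> 0"
        then obtain k where k: "q = of_int k / of_nat (d i)" using d i by blast
        have "d i dvd D" unfolding D_def using i by (auto intro: dvd_prodI)
        then obtain e where e: "D = d i * e" by blast
        have "d i > 0" using d i by auto
        then have "e > 0" using D e by (cases e) auto
        have "q = of_int (k * int e) / of_nat D" using k e \<open>e > 0\<close> by (simp add: field_simps)
        then show False using nq by blast
      qed
      then show ?thesis using emb_off[OF D nq] by simp
    qed
  qed
  define F where "F = (\<Sum>i<n. f i)"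
  have T: "(\<lambda>q. \<Sum>i<n. S i q) = emb D F"
    unfolding F_def by (auto simp: emb_sum Semb)
  define M where "M = mat n n (\<lambda>(i,j). (dl D ^^ i) (f j))"
  define G where "G = det M"
  have W: "wronskian n S = emb D G"
  proof
    fix q
    have "wronskian n S q = (\<Sum>p \<in> {p. p permutes {..<n}}.
      of_int (sign p) * emb D (\<Prod>i=0..<n. (dl D ^^ i) (f (p i))) q)"
      unfolding wronskian_def
    proof (rule sum.cong[OF refl])
      fix p assume "p \<in> {p. p permutes {..<n}}"
      then have p: "p i < n" if "i < n" for i using that permutes_in_image by fastforce
      have eq: "map (\<lambda>i. (pz_deriv ^^ i) (S (p i))) [0..<n] = map (emb D) (map (\<lambda>i. (dl D ^^ i) (f (p i))) [0..<n])"
        using p by (auto simp: Semb emb_deriv_pow[OF D])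
      then have "pz_prod_list (map (\<lambda>i. (pz_deriv ^^ i) (S (p i))) [0..<n]) = emb D (\<Prod>i=0..<n. (dl D ^^ i) (f (p i)))"
        unfolding eq emb_prod_list[OF D] by (metis distinct_upt prod.distinct_set_conv_list set_upt)
      then show "of_int (sign p) * pz_prod_list (map (\<lambda>i. (pz_deriv ^^ i) (S (p i))) [0..<n]) q =
        of_int (sign p) * emb D (\<Prod>i = 0..<n. (dl D ^^ i) (f (p i))) q" by simp
    qed
    also have "\<dots> = emb D (\<Sum>p \<in> {p. p permutes {..<n}}. of_int (sign p) * (\<Prod>i=0..<n. (dl D ^^ i) (f (p i)))) q"
      by (simp add: emb_sum finite_permutations emb_of_int_mult)
    also have "(\<Sum>p \<in> {p. p permutes {..<n}}. of_int (sign p) * (\<Prod>i=0..<n. (dl D ^^ i) (f (p i)))) = G"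
      unfolding G_def M_def
    proof (subst det_def'[of _ n], simp, rule sum.cong)
      show "{p. p permutes {..<n}} = {p. p permutes {0..<n}}" by (simp add: lessThan_atLeast0)
    next
      fix p assume "p \<in> {p. p permutes {0..<n}}"
      then have p: "p i < n" if "i < n" for i using that permutes_in_image by fastforce
      then show "of_int (sign p) * (\<Prod>i = 0..<n. (dl D ^^ i) (f (p i))) =
         of_int (sign p) * (\<Prod>i = 0..<n. mat n n (\<lambda>(i, j). (dl D ^^ i) (f j)) $$ (i, p i))"
        by (auto intro!: prod.cong)
    qed
    finally show "wronskian n S q = emb D G q" .
  qed
  define E :: "complex fls mat" where "E = mat n n (\<lambda>(i,j). if i = j \<or> j = n - 1 then 1 else 0)"
  have Mc: "M \<in> carrier_mat n n" and Ec: "E \<in> carrier_mat n n" by (auto simp: M_def E_def)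
  have "upper_triangular E" unfolding E_def upper_triangular_def by auto
  then have "det E = prod_list (diag_mat E)" using det_upper_triangular Ec by blast
  also have "diag_mat E = map (\<lambda>i. 1) [0..<n]" by (auto simp: diag_mat_def E_def)
  finally have detE: "det E = 1" by (simp add: map_replicate_const)
  have G2: "G = det (M * E)" unfolding G_def using det_mult[OF Mc Ec] detE by simp
  have ME: "(M * E) $$ (i,j) = (\<Sum>k\<in>{0..<n}. M $$ (i,k) * E $$ (k,j))" if "i < n" "j < n" for i j
    using that Mc Ec by (simp add: scalar_prod_def)
  define s where "s = (\<Sum>i<n. i)"
  have Gvb: "vb (a - int D * int s) G" if Fa: "vb a F" for a
  proof -
    define eb where "eb i j = (if j = n - 1 then a else 0) - int i * int D" for i j
    have ent: "vb (eb i j) ((M * E) $$ (i,j))" if ij: "i < n" "j < n" for i j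
    proof (cases "j = n - 1")
      case True
      have "(M * E) $$ (i,j) = (\<Sum>k\<in>{0..<n}. (dl D ^^ i) (f k))"
        unfolding ME[OF ij] using ij True by (auto simp: M_def E_def intro!: sum.cong)
      also have "\<dots> = (dl D ^^ i) F" unfolding F_def by (simp add: dl_pow_sum lessThan_atLeast0)
      finally show ?thesis using vb_dl_pow[OF Fa, of i D] True by (simp add: eb_def)
    next
      case False
      have "(M * E) $$ (i,j) = (\<Sum>k\<in>{0..<n}. if k = j then (dl D ^^ i) (f k) else 0)"
        unfolding ME[OF ij] by (rule sum.cong) (use ij False in \<open>auto simp: M_def E_def\<close>)
      also have "\<dots> = (dl D ^^ i) (f j)" using ij by (subst sum.delta) auto
      finally show ?thesis using vb_dl_pow[OF fvb[OF ij(2)], of i D] False by (simp add: eb_def)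
    qed
    have sumeb: "(\<Sum>i\<in>{0..<n}. eb i (p i)) = a - int D * int s" if p: "p permutes {0..<n}" for p
    proof -
      have ip: "inv_into UNIV p permutes {0..<n}" using permutes_inv[OF p] by simp
      have "n - 1 \<in> {0..<n}" using assms(1) by auto
      then have i0: "inv_into UNIV p (n - 1) \<in> {0..<n}" using permutes_in_image[OF ip] by simp
      have ss: "(\<Sum>i\<in>{0..<n}. int i * int D) = int D * int s"
        unfolding s_def by (simp add: of_nat_sum sum_distrib_left mult.commute lessThan_atLeast0)
      have "(\<Sum>i\<in>{0..<n}. eb i (p i)) = (\<Sum>i\<in>{0..<n}. if i = inv_into UNIV p (n - 1) then a else 0) - (\<Sum>i\<in>{0..<n}. int i * int D)"
        unfolding eb_def sum_subtractf using perm_eq_iff[OF p] by simp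
      also have "\<dots> = a - int D * int s"
        using i0 by (simp add: ss)
      finally show ?thesis .
    qed
    have "G = (\<Sum>p\<in>{p. p permutes {0..<n}}. signof p * (\<Prod>i=0..<n. (M * E) $$ (i, p i)))"
      unfolding G2 using det_def'[of "M * E" n] Mc Ec by simp
    also have "vb (a - int D * int s) \<dots>"
    proof (rule vb_sum)
      fix p assume "p \<in> {p. p permutes {0..<n}}"
      then have p: "p permutes {0..<n}" by simp
      then have pi: "p i < n" if "i < n" for i using that permutes_in_image by fastforce
      have "vb (0 + (\<Sum>i\<in>{0..<n}. eb i (p i))) (signof p * (\<Prod>i=0..<n. (M * E) $$ (i, p i)))"
        by (rule vb_mult[OF vb_of_int vb_prod]) (auto intro: ent pi)
      then show "vb (a - int D * int s) (signof p * (\<Prod>i=0..<n. (M * E) $$ (i, p i)))"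
        using sumeb[OF p] by simp
    qed (simp add: finite_permutations)
    finally show ?thesis .
  qed
  have sreal: "real s = real n * (real n - 1) / 2" unfolding s_def by (rule sum_id_real)
  show ?thesis
  proof (cases "F = 0")
    case True
    then have "vb a F" for a by simp
    have "G = 0"
    proof (rule fls_eqI)
      fix k
      have "vb (k + 1 + int D * int s - int D * int s) G" by (rule Gvb) (simp add: True)
      then show "fls_nth G k = fls_nth 0 k" by (simp add: vb_def)
    qed
    then show ?thesis using W pz_val_emb0 by simp
  next
    case False
    have TF: "pz_val (\<lambda>q. \<Sum>i<n. S i q) = ereal (real_of_rat (of_int (fls_subdegree F) / of_nat D))"
      unfolding T using pz_val_emb[OF D False] .
    show ?thesis
    proof (cases "G = 0")
      case True
      then show ?thesis using W pz_val_emb0 by simp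
    next
      case Gn: False
      have "vb (fls_subdegree F) F" by (simp add: vb_def)
      from vb_le_subdeg[OF Gvb[OF this] Gn]
      have le: "fls_subdegree F \<le> int D * int s + fls_subdegree G" by simp
      have "real_of_int (fls_subdegree F) \<le> real_of_int (int D * int s + fls_subdegree G)"
        using le by (simp only: of_int_le_iff)
      then have le2: "real_of_int (fls_subdegree F) \<le> real D * real s + real_of_int (fls_subdegree G)"
        by simp
      have key: "real_of_int (fls_subdegree F) / real D \<le> real s + real_of_int (fls_subdegree G) / real D"
        using D le2 by (simp add: field_simps)
      have cv: "real_of_rat (of_int x / of_nat D) = real_of_int x / real D" for x
        by (simp add: of_rat_divide)
      show ?thesis unfolding TF W pz_val_emb[OF D Gn] cv plus_ereal.simps ereal_less_eq(3)
        using key sreal by simp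
    qed
  qed
qed

end
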